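(* Let $E$ be a $C$-pseudo-cone. Then $E$ is a $C$-asymptotic set if and only if $h_E(v)=0$ for all $v\in\partial\Omega_{C^\circ}$.
   Context: $C\subset\mathbb{R}^n$ ($n\ge2$) is a pointed closed convex cone with nonempty interior; $C^\circ$ its polar cone; $\partial\Omega_{C^\circ}=\mathbb{S}^{n-1}\cap\partial C^\circ$. A $C$-pseudo-cone is a nonempty closed convex set $E$ with $o\notin E$, $\lambda x\in E$ for all $x\in E,\lambda\ge1$, and recession cone equal to $C$. A $C$-asymptotic set is an unbounded closed convex set $\mathbb{A}\subset C$ with nonempty interior and $o\notin\mathbb{A}$ such that $\lim_{x\in\partial\mathbb{A},|x|\to\infty}d(x,\partial C)=0$. $h_E(v)=\sup_{x\in E}\langle x,v\rangle$. *)

theory Defs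
  imports "HOL-Analysis.Analysis"
begin

definition pointed_convex_cone :: "'a::euclidean_space set \<Rightarrow> bool" where
  "pointed_convex_cone C \<longleftrightarrow> cone C \<and> convex C \<and> closed C \<and> interior C \<noteq> {}
     \<and> C \<inter> uminus ` C = {0}"

definition polar_cone :: "'a::euclidean_space set \<Rightarrow> 'a set" where
  "polar_cone C = {v. \<forall>x\<in>C. x \<bullet> v \<le> 0}"

definition recession_cone :: "'a::euclidean_space set \<Rightarrow> 'a set" where
  "recession_cone E = {y. \<forall>x\<in>E. \<forall>t::real. t \<ge> 0 \<longrightarrow> x + t *\<^sub>R y \<in> E}"

definition pseudo_cone :: "'a::euclidean_space set \<Rightarrow> 'a set \<Rightarrow> bool" where
  "pseudo_cone C E \<longleftrightarrow> E \<noteq> {} \<and> closed E \<and> convex E \<and> 0 \<notin> E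
     \<and> (\<forall>x\<in>E. \<forall>l::real. l \<ge> 1 \<longrightarrow> l *\<^sub>R x \<in> E)
     \<and> recession_cone E = C"

definition asymptotic_set :: "'a::euclidean_space set \<Rightarrow> 'a set \<Rightarrow> bool" where
  "asymptotic_set C A \<longleftrightarrow> \<not> bounded A \<and> closed A \<and> convex A \<and> A \<subseteq> C
     \<and> interior A \<noteq> {} \<and> 0 \<notin> A
     \<and> (\<forall>\<epsilon>>0. \<exists>R. \<forall>x\<in>frontier A. norm x > R \<longrightarrow> infdist x (frontier C) < \<epsilon>)"

definition support_fun :: "'a::euclidean_space set \<Rightarrow> 'a \<Rightarrow> real" where
  "support_fun E v = (SUP x\<in>E. x \<bullet> v)"

end

theory Submission
  imports Defs
begin

lemma polar_closed: "closed (polar_cone C)"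
proof -
  have "polar_cone C = (\<Inter>x\<in>C. {v. x \<bullet> v \<le> 0})" unfolding polar_cone_def by auto
  thus ?thesis by (simp add: closed_INT closed_halfspace_le)
qed

lemma pseudo_sub:
  assumes "pseudo_cone C E" shows "E \<subseteq> C"
proof
  fix x assume x: "x \<in> E"
  have cl: "closed E" and cv: "convex E" and sc: "\<forall>x\<in>E. \<forall>l::real. l \<ge> 1 \<longrightarrow> l *\<^sub>R x \<in> E"
    and rc: "recession_cone E = C" using assms unfolding pseudo_cone_def by auto
  have "x \<in> recession_cone E" unfolding recession_cone_def
  proof (intro CollectI ballI allI impI)
    fix z t assume z: "z \<in> E" and t: "(0::real) \<le> t"
    show "z + t *\<^sub>R x \<in> E"
    proof (cases "t = 0")
      case True then show ?thesis using z by simp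
    next
      case False
      with t have tp: "t > 0" by simp
      obtain N :: nat where N: "1 / t \<le> real N" using real_arch_simple by blast
      define M where "M = N + 1"
      have M1: "real M \<ge> 1" and Mt: "t * real M \<ge> 1" using N tp unfolding M_def
        by (auto simp: field_simps)
      define f where "f n = z + t *\<^sub>R x - (1 / real (n + M)) *\<^sub>R z" for n
      have inE: "f n \<in> E" for n
      proof -
        define a where "a = 1 / real (n + M)"
        have a0: "a > 0" and a1: "a \<le> 1" using M1 unfolding a_def by auto
        have "t / a \<ge> 1" using Mt a0 tp unfolding a_def by (simp add: field_simps) (smt (verit) mult_nonneg_nonneg of_nat_0_le_iff)
        hence "(t / a) *\<^sub>R x \<in> E" using sc x by blast
        hence "(1 - a) *\<^sub>R z + a *\<^sub>R ((t / a) *\<^sub>R x) \<in> E"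
          using convexD[OF cv z \<open>(t / a) *\<^sub>R x \<in> E\<close>, of "1 - a" a] a0 a1 by simp
        moreover have "(1 - a) *\<^sub>R z + a *\<^sub>R ((t / a) *\<^sub>R x) = f n"
          using a0 unfolding f_def a_def[symmetric] by (simp add: algebra_simps)
        ultimately show ?thesis by simp
      qed
      have "(\<lambda>n. 1 / real (n + M)) \<longlonglongrightarrow> 0"
        using LIMSEQ_ignore_initial_segment[OF lim_inverse_n', of M] by simp
      hence "f \<longlonglongrightarrow> z + t *\<^sub>R x - 0 *\<^sub>R z"
        unfolding f_def by (intro tendsto_intros)
      hence "f \<longlonglongrightarrow> z + t *\<^sub>R x" by simp
      thus ?thesis using closed_sequentially[OF cl] inE by blast
    qed
  qed
  thus "x \<in> C" using rc by simp
qed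

lemma cone_facts:
  assumes "pointed_convex_cone C"
  shows "\<And>x y. x \<in> C \<Longrightarrow> y \<in> C \<Longrightarrow> x + y \<in> C"
    and "\<And>x c. x \<in> C \<Longrightarrow> (c::real) \<ge> 0 \<Longrightarrow> c *\<^sub>R x \<in> C"
    and "\<exists>u\<in>C. u \<noteq> 0"
    and "closed C"
proof -
  have cc: "convex C \<and> cone C" using assms unfolding pointed_convex_cone_def by auto
  show "\<And>x y. x \<in> C \<Longrightarrow> y \<in> C \<Longrightarrow> x + y \<in> C" "\<And>x c. x \<in> C \<Longrightarrow> (c::real) \<ge> 0 \<Longrightarrow> c *\<^sub>R x \<in> C"
    using cc[unfolded convex_cone] by auto
  show "closed C" using assms unfolding pointed_convex_cone_def by auto
  show "\<exists>u\<in>C. u \<noteq> 0"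
  proof (rule ccontr)
    assume "\<not> ?thesis"
    hence "C \<subseteq> {0}" by auto
    hence "interior C \<subseteq> interior {0}" by (rule interior_mono)
    thus False using assms unfolding pointed_convex_cone_def by auto
  qed
qed

lemma rec_add:
  assumes "pseudo_cone C E" "x \<in> E" "c \<in> C"
  shows "x + c \<in> E"
  using assms unfolding pseudo_cone_def recession_cone_def
  by (metis (no_types, lifting) mem_Collect_eq order_refl scaleR_one zero_le_one)

lemma dir_if:
  fixes C E :: "'a::euclidean_space set"
  assumes PC: "pointed_convex_cone C" and PE: "pseudo_cone C E"
    and H: "\<forall>v\<in>sphere 0 1 \<inter> frontier (polar_cone C). support_fun E v = 0"
  shows "asymptotic_set C E"
proof -
  note add = cone_facts(1)[OF PC] and scl = cone_facts(2)[OF PC]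
  obtain u where uC: "u \<in> C" and u0: "u \<noteq> 0" using cone_facts(3)[OF PC] by blast
  have clC: "closed C" using PC unfolding pointed_convex_cone_def by auto
  have EC: "E \<subseteq> C" by (rule pseudo_sub[OF PE])
  have clE: "closed E" and cvE: "convex E" and nE: "E \<noteq> {}" and E0: "0 \<notin> E"
    using PE unfolding pseudo_cone_def by auto
  obtain x0 where x0: "x0 \<in> E" using nE by blast
  have unb: "\<not> bounded E"
  proof
    assume "bounded E"
    then obtain B where B: "\<And>x. x \<in> E \<Longrightarrow> norm x \<le> B" unfolding bounded_iff by blast
    define t where "t = (\<bar>B\<bar> + norm x0 + 1) / norm u"
    have t0: "t \<ge> 0" unfolding t_def by simp
    have "x0 + t *\<^sub>R u \<in> E" using rec_add[OF PE x0 scl[OF uC t0]] .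
    hence "norm (x0 + t *\<^sub>R u) \<le> B" by (rule B)
    moreover have "norm (t *\<^sub>R u) = \<bar>B\<bar> + norm x0 + 1"
      using u0 t0 unfolding t_def by simp
    moreover have "norm (t *\<^sub>R u) \<le> norm (x0 + t *\<^sub>R u) + norm x0"
      by (metis add_diff_cancel_left' norm_triangle_ineq4 add.commute norm_minus_commute) 
    ultimately show False by linarith
  qed
  have intE: "interior E \<noteq> {}"
  proof -
    obtain c where "c \<in> interior C" using PC unfolding pointed_convex_cone_def by auto
    then obtain r where r: "r > 0" "ball c r \<subseteq> C" using mem_interior by blast
    have "ball (x0 + c) r \<subseteq> E"
    proof
      fix y assume "y \<in> ball (x0 + c) r"
      hence "y - x0 \<in> ball c r" by (simp add: dist_norm algebra_simps)
      hence "y - x0 \<in> C" using r by blast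
      from rec_add[OF PE x0 this] show "y \<in> E" by simp
    qed
    hence "x0 + c \<in> interior E" using r mem_interior by blast
    thus ?thesis by blast
  qed
  define P where "P = polar_cone C"
  have clP: "closed P" unfolding P_def by (rule polar_closed)
  have Pmem: "w \<in> P \<longleftrightarrow> (\<forall>x\<in>C. x \<bullet> w \<le> 0)" for w unfolding P_def polar_cone_def by simp
  have main: "\<exists>R. \<forall>x\<in>frontier E. norm x > R \<longrightarrow> infdist x (frontier C) < \<epsilon>" if ep: "\<epsilon> > 0" for \<epsilon>
  proof -
    define e where "e = \<epsilon> / 2"
    have e0: "e > 0" using ep unfolding e_def by simp
    define T where "T = {w \<in> sphere 0 1 \<inter> P. \<forall>x\<in>E. x \<bullet> w \<le> - e}"
    define K where "K = C \<inter> sphere 0 1"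
    have unif: "\<exists>c>0. \<forall>w\<in>T. \<forall>y\<in>C. y \<bullet> w \<le> - c * norm y"
    proof (cases "T = {}")
      case True then show ?thesis by (intro exI[of _ 1]) auto
    next
      case False
      have Kne: "K \<noteq> {}" using uC u0 scl[OF uC, of "1 / norm u"] unfolding K_def
        by (auto intro!: exI[of _ "(1 / norm u) *\<^sub>R u"])
      have clT: "closed T"
      proof -
        have "T = sphere 0 1 \<inter> P \<inter> (\<Inter>x\<in>E. {w. x \<bullet> w \<le> - e})" unfolding T_def by auto
        thus ?thesis using clP by (auto intro!: closed_Int closed_INT closed_halfspace_le)
      qed
      have cT: "compact T"
      proof -
        have "T = sphere 0 1 \<inter> T" unfolding T_def by auto
        thus ?thesis using compact_Int_closed[OF compact_sphere clT, of 0 1] by simp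
      qed
      have cK: "compact K" unfolding K_def using clC by (simp add: closed_Int_compact)
      have "\<exists>p\<in>T \<times> K. \<forall>q\<in>T \<times> K. (\<lambda>(w,y). y \<bullet> w) q \<le> (\<lambda>(w,y). y \<bullet> w) p"
        apply (rule continuous_attains_sup)
        using cT cK False Kne apply (auto intro!: compact_Times)[2]
        apply (simp add: case_prod_unfold)
        by (intro continuous_intros)
      then obtain w0 y0 where w0: "w0 \<in> T" and y0: "y0 \<in> K"
        and mx: "\<And>w y. w \<in> T \<Longrightarrow> y \<in> K \<Longrightarrow> y \<bullet> w \<le> y0 \<bullet> w0" by fastforce
      have w0P: "w0 \<in> P" and w0S: "w0 \<in> sphere 0 1" and w0E: "\<forall>x\<in>E. x \<bullet> w0 \<le> - e"
        using w0 unfolding T_def by auto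
      have y0C: "y0 \<in> C" and y0n: "norm y0 = 1" using y0 unfolding K_def by auto
      have le0: "y0 \<bullet> w0 \<le> 0" using w0P y0C Pmem by blast
      have neg: "y0 \<bullet> w0 < 0"
      proof (rule ccontr)
        assume "\<not> ?thesis"
        hence eq0: "y0 \<bullet> w0 = 0" using le0 by simp
        have "w0 \<notin> frontier P"
        proof
          assume "w0 \<in> frontier P"
          hence "support_fun E w0 = 0" using H w0S unfolding P_def by blast
          moreover have "support_fun E w0 \<le> - e" unfolding support_fun_def
            using nE w0E by (intro cSUP_least) auto
          ultimately show False using e0 by simp
        qed
        hence "w0 \<in> interior P" using w0P clP unfolding frontier_def by (simp add: closure_closed)
        then obtain \<eta> where eta: "\<eta> > 0" "ball w0 \<eta> \<subseteq> P" using mem_interior by blast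
        have "w0 + (\<eta>/2) *\<^sub>R y0 \<in> ball w0 \<eta>" using eta y0n by (simp add: dist_norm)
        hence "w0 + (\<eta>/2) *\<^sub>R y0 \<in> P" using eta by blast
        hence "y0 \<bullet> (w0 + (\<eta>/2) *\<^sub>R y0) \<le> 0" using y0C Pmem by blast
        moreover have "y0 \<bullet> (w0 + (\<eta>/2) *\<^sub>R y0) = \<eta>/2"
          using eq0 y0n by (simp add: inner_add_right dot_square_norm)
        ultimately show False using eta by simp
      qed
      show ?thesis
      proof (intro exI[of _ "- (y0 \<bullet> w0)"] conjI ballI)
        show "0 < - (y0 \<bullet> w0)" using neg by simp
        fix w y assume w: "w \<in> T" and y: "y \<in> C"
        show "y \<bullet> w \<le> - (- (y0 \<bullet> w0)) * norm y"
        proof (cases "y = 0")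
          case True then show ?thesis by simp
        next
          case False
          have "(1 / norm y) *\<^sub>R y \<in> K" unfolding K_def using scl[OF y, of "1 / norm y"] False by simp
          hence "((1 / norm y) *\<^sub>R y) \<bullet> w \<le> y0 \<bullet> w0" using mx w by blast
          hence "(y \<bullet> w) / norm y \<le> y0 \<bullet> w0" by simp
          thus ?thesis using False by (simp add: divide_le_eq mult.commute)
        qed
      qed
    qed
    then obtain c where c0: "c > 0" and cT: "\<And>w y. w \<in> T \<Longrightarrow> y \<in> C \<Longrightarrow> y \<bullet> w \<le> - c * norm y"
      by blast
    show ?thesis
    proof (intro exI[of _ "norm x0 / c"] ballI impI)
      fix x assume xF: "x \<in> frontier E" and xR: "norm x0 / c < norm x"
      show "infdist x (frontier C) < \<epsilon>"
      proof (rule ccontr)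
        assume "\<not> ?thesis"
        hence ge: "infdist x (frontier C) \<ge> \<epsilon>" by simp
        have xE: "x \<in> E" using xF clE frontier_subset_closed by blast
        have xC: "x \<in> C" using xE EC by blast
        have "ball x \<epsilon> \<inter> frontier C = {}"
        proof (rule ccontr)
          assume "ball x \<epsilon> \<inter> frontier C \<noteq> {}"
          then obtain y where "y \<in> ball x \<epsilon>" "y \<in> frontier C" by blast
          thus False using infdist_le[of y "frontier C" x] ge by simp
        qed
        moreover have "ball x \<epsilon> \<inter> C \<noteq> {}" using xC ep centre_in_ball by blast
        ultimately have ballC: "ball x \<epsilon> \<subseteq> C"
          using connected_Int_frontier[OF connected_ball, of x \<epsilon> C] by blast
        have "x \<notin> rel_interior E" using xF rel_interior_nonempty_interior[OF intE]
          unfolding frontier_def by simp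
        moreover have "x \<in> closure E" using xE closure_subset by blast
        ultimately obtain a where a0: "a \<noteq> 0" and aE: "\<And>y. y \<in> closure E \<Longrightarrow> a \<bullet> x \<le> a \<bullet> y"
          using supporting_hyperplane_relative_frontier[OF cvE] by blast
        define w where "w = - ((1 / norm a) *\<^sub>R a)"
        have wS: "w \<in> sphere 0 1" unfolding w_def using a0 by simp
        have wsup: "y \<bullet> w \<le> x \<bullet> w" if "y \<in> E" for y
        proof -
          have "a \<bullet> x \<le> a \<bullet> y" using aE that closure_subset by blast
          hence "(a \<bullet> x) / norm a \<le> (a \<bullet> y) / norm a" using a0 by (simp add: divide_right_mono)
          thus ?thesis unfolding w_def by (simp add: inner_commute)
        qed
        have wP: "w \<in> P" unfolding Pmem
        proof
          fix c' assume "c' \<in> C"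
          hence "x + c' \<in> E" using rec_add[OF PE xE] by blast
          hence "(x + c') \<bullet> w \<le> x \<bullet> w" by (rule wsup)
          thus "c' \<bullet> w \<le> 0" by (simp add: inner_add_left)
        qed
        have "x + e *\<^sub>R w \<in> ball x \<epsilon>" using wS e0 unfolding e_def by (simp add: dist_norm)
        hence "x + e *\<^sub>R w \<in> C" using ballC by blast
        hence "(x + e *\<^sub>R w) \<bullet> w \<le> 0" using wP Pmem by blast
        moreover have "(x + e *\<^sub>R w) \<bullet> w = x \<bullet> w + e" using wS
          by (simp add: inner_add_left dot_square_norm)
        ultimately have xw: "x \<bullet> w \<le> - e" by simp
        have wT: "w \<in> T" unfolding T_def using wS wP wsup xw by fastforce
        have "x \<bullet> w \<le> - c * norm x" using cT[OF wT xC] .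
        moreover have "x0 \<bullet> w \<le> x \<bullet> w" using wsup x0 .
        moreover have "- (x0 \<bullet> w) \<le> norm x0" using norm_cauchy_schwarz[of "- x0" w] wS by simp
        ultimately have "c * norm x \<le> norm x0" by linarith
        hence "norm x \<le> norm x0 / c" using c0 by (simp add: field_simps)
        thus False using xR by simp
      qed
    qed
  qed
  show ?thesis unfolding asymptotic_set_def using unb clE cvE EC intE E0 main by blast
qed

lemma dir_only:
  fixes C E :: "'a::euclidean_space set"
  assumes PC: "pointed_convex_cone C" and PE: "pseudo_cone C E"
    and A: "asymptotic_set C E"
    and vS: "v \<in> sphere 0 1" and vF: "v \<in> frontier (polar_cone C)"
  shows "support_fun E v = 0"
proof -
  note add = cone_facts(1)[OF PC] and scl = cone_facts(2)[OF PC]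
  have clC: "closed C" using PC unfolding pointed_convex_cone_def by auto
  have pt: "C \<inter> uminus ` C = {0}" using PC unfolding pointed_convex_cone_def by auto
  have EC: "E \<subseteq> C" by (rule pseudo_sub[OF PE])
  have clE: "closed E" and nE: "E \<noteq> {}"
    using PE unfolding pseudo_cone_def by auto
  have intE: "interior E \<noteq> {}"
    and asy: "\<And>\<epsilon>. \<epsilon> > 0 \<Longrightarrow> \<exists>R. \<forall>x\<in>frontier E. norm x > R \<longrightarrow> infdist x (frontier C) < \<epsilon>"
    using A unfolding asymptotic_set_def by auto
  define P where "P = polar_cone C"
  have clP: "closed P" unfolding P_def by (rule polar_closed)
  have Pmem: "w \<in> P \<longleftrightarrow> (\<forall>x\<in>C. x \<bullet> w \<le> 0)" for w unfolding P_def polar_cone_def by simp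
  have vP: "v \<in> P" using vF clP unfolding P_def frontier_def by (simp add: closure_closed)
  have vint: "v \<notin> interior P" using vF unfolding P_def frontier_def by simp
  have Ev: "\<forall>x\<in>E. x \<bullet> v \<le> 0" using vP EC Pmem by blast
  have bdd: "bdd_above ((\<lambda>x. x \<bullet> v) ` E)" using Ev by (intro bdd_aboveI2) auto
  have le: "support_fun E v \<le> 0" unfolding support_fun_def using nE Ev by (intro cSUP_least) auto
  show ?thesis
  proof (rule ccontr)
    assume "support_fun E v \<noteq> 0"
    define \<delta> where "\<delta> = - support_fun E v"
    have d0: "\<delta> > 0" using le \<open>support_fun E v \<noteq> 0\<close> unfolding \<delta>_def by simp
    have Ed: "x \<bullet> v \<le> - \<delta>" if "x \<in> E" for x
      unfolding \<delta>_def support_fun_def using cSUP_upper[OF that bdd] by simp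
    have "\<exists>u\<in>C. u \<noteq> 0 \<and> u \<bullet> v = 0"
    proof (rule ccontr)
      assume nu: "\<not> ?thesis"
      define K where "K = C \<inter> sphere 0 1"
      have Kneg: "y \<bullet> v < 0" if "y \<in> K" for y
      proof -
        have "y \<in> C" "y \<noteq> 0" using that unfolding K_def by auto
        thus ?thesis using nu vP Pmem by force
      qed
      have "\<exists>m>0. \<forall>y\<in>K. y \<bullet> v \<le> - m"
      proof (cases "K = {}")
        case True then show ?thesis by (intro exI[of _ 1]) auto
      next
        case False
        have cK: "compact K" unfolding K_def using clC by (simp add: closed_Int_compact)
        have "\<exists>y0\<in>K. \<forall>y\<in>K. y \<bullet> v \<le> y0 \<bullet> v"
          by (rule continuous_attains_sup[OF cK False]) (intro continuous_intros)
        then obtain y0 where "y0 \<in> K" "\<forall>y\<in>K. y \<bullet> v \<le> y0 \<bullet> v" by blast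
        thus ?thesis using Kneg by (intro exI[of _ "- (y0 \<bullet> v)"]) auto
      qed
      then obtain m where m0: "m > 0" and mK: "\<And>y. y \<in> K \<Longrightarrow> y \<bullet> v \<le> - m" by blast
      have "ball v m \<subseteq> P"
      proof
        fix w assume w: "w \<in> ball v m"
        show "w \<in> P" unfolding Pmem
        proof
          fix y assume yC: "y \<in> C"
          show "y \<bullet> w \<le> 0"
          proof (cases "y = 0")
            case True then show ?thesis by simp
          next
            case False
            define y' where "y' = (1 / norm y) *\<^sub>R y"
            have y'K: "y' \<in> K" unfolding K_def y'_def using scl[OF yC, of "1 / norm y"] False by simp
            have "y' \<bullet> (w - v) \<le> norm y' * norm (w - v)" by (rule norm_cauchy_schwarz)
            also have "\<dots> < m" using w False unfolding y'_def by (simp add: dist_norm norm_minus_commute)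
            finally have "y' \<bullet> w < 0" using mK[OF y'K] by (simp add: inner_diff_right)
            hence "(y \<bullet> w) / norm y < 0" unfolding y'_def by simp
            thus ?thesis using False by (simp add: divide_less_0_iff)
          qed
        qed
      qed
      hence "v \<in> interior P" using m0 mem_interior by blast
      thus False using vint by simp
    qed
    then obtain u where uC: "u \<in> C" and u0: "u \<noteq> 0" and uv: "u \<bullet> v = 0" by blast
    obtain x0 where "x0 \<in> interior E" using intE by blast
    then obtain r where r0: "r > 0" and rb: "ball x0 r \<subseteq> E" using mem_interior by blast
    have x0E: "x0 \<in> E" using rb r0 centre_in_ball by blast
    have x0v: "x0 \<bullet> v \<le> - \<delta>" using Ed[OF x0E] .
    define s0 where "s0 = \<delta> / (- (x0 \<bullet> v))"
    have s0p: "s0 > 0" unfolding s0_def using d0 x0v by (intro divide_pos_pos) auto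
    obtain R where R: "\<And>x. x \<in> frontier E \<Longrightarrow> norm x > R \<Longrightarrow> infdist x (frontier C) < s0 * r"
      using asy[of "s0 * r"] s0p r0 by auto
    define t where "t = (\<bar>R\<bar> + norm x0 + 1) / norm u"
    have t0: "t \<ge> 0" unfolding t_def by simp
    have ntu: "norm (t *\<^sub>R u) = \<bar>R\<bar> + norm x0 + 1" using u0 t0 unfolding t_def by simp
    have tuC: "t *\<^sub>R u \<in> C" using scl[OF uC t0] .
    have a1: "t *\<^sub>R u + x0 \<in> E" using rec_add[OF PE x0E tuC] by (simp add: add.commute)
    have a2: "t *\<^sub>R u \<notin> E" using Ed[of "t *\<^sub>R u"] uv d0 by auto
    have "closed_segment (t *\<^sub>R u) (t *\<^sub>R u + x0) \<inter> frontier E \<noteq> {}"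
      by (rule connected_Int_frontier) (use a1 a2 in auto)
    then obtain z where zs: "z \<in> closed_segment (t *\<^sub>R u) (t *\<^sub>R u + x0)" and zF: "z \<in> frontier E"
      by blast
    obtain l where l0: "0 \<le> l" and l1: "l \<le> 1" and zl: "z = t *\<^sub>R u + l *\<^sub>R x0"
      using zs unfolding closed_segment_def by (auto simp: algebra_simps)
    have zE: "z \<in> E" using zF clE frontier_subset_closed by blast
    have "l * (x0 \<bullet> v) \<le> - \<delta>" using Ed[OF zE] uv unfolding zl by (simp add: inner_add_left)
    hence "\<delta> \<le> l * (- (x0 \<bullet> v))" by simp
    moreover have "- (x0 \<bullet> v) > 0" using x0v d0 by simp
    ultimately have ls: "s0 \<le> l" unfolding s0_def using pos_divide_le_eq[of "- (x0 \<bullet> v)" \<delta> l] by linarith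
    have lp: "l > 0" using ls s0p by simp
    have "norm (t *\<^sub>R u) \<le> norm z + norm (l *\<^sub>R x0)" unfolding zl
      by (metis add_diff_cancel_right' norm_triangle_ineq4)
    moreover have "norm (l *\<^sub>R x0) \<le> norm x0" using l0 l1 by (simp add: mult_left_le_one_le)
    ultimately have zR: "norm z > R" using ntu by linarith
    have inf: "infdist z (frontier C) < s0 * r" using R[OF zF zR] .
    have Cne: "C \<noteq> {}" using uC by blast
    have "C \<noteq> UNIV"
    proof
      assume "C = UNIV"
      hence "u \<in> C \<inter> uminus ` C" by (metis IntI UNIV_I image_eqI minus_minus)
      thus False using pt u0 by simp
    qed
    hence fne: "frontier C \<noteq> {}" using Cne frontier_eq_empty by blast
    have clF: "closed (frontier C)" by simp
    obtain p where pF: "p \<in> frontier C" and pd: "infdist z (frontier C) = dist z p"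
      using infdist_attains_inf[OF clF fne] by blast
    have "ball z (l * r) \<subseteq> C"
    proof
      fix q assume q: "q \<in> ball z (l * r)"
      define y where "y = x0 + (1 / l) *\<^sub>R (q - z)"
      have "norm (q - z) < l * r" using q by (simp add: dist_norm norm_minus_commute)
      hence "norm (q - z) / l < r" using lp by (simp add: divide_less_eq mult.commute)
      hence "norm ((1 / l) *\<^sub>R (q - z)) < r" using lp by simp
      hence "y \<in> ball x0 r" unfolding y_def by (simp add: dist_norm)
      hence yC: "y \<in> C" using rb EC by blast
      have "q = t *\<^sub>R u + l *\<^sub>R y" unfolding y_def zl using lp by (simp add: algebra_simps)
      thus "q \<in> C" using add[OF tuC scl[OF yC]] l0 by simp
    qed
    hence "ball z (l * r) \<subseteq> interior C" by (simp add: interior_maximal)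
    moreover have "p \<in> ball z (l * r)"
    proof -
      have "s0 * r \<le> l * r" using ls r0 by simp
      thus ?thesis using inf pd by simp
    qed
    ultimately have "p \<in> interior C" by blast
    thus False using pF unfolding frontier_def by simp
  qed
qed

theorem corollary3p1:
  fixes C E :: "'a::euclidean_space set"
  assumes "DIM('a) \<ge> 2"
    and "pointed_convex_cone C"
    and "pseudo_cone C E"
  shows "asymptotic_set C E \<longleftrightarrow>
         (\<forall>v\<in>sphere 0 1 \<inter> frontier (polar_cone C). support_fun E v = 0)"
  using dir_if[OF assms(2,3)] dir_only[OF assms(2,3)] by blast

end
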